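(* Let $IS\in\{\Box,\blacksquare\}^2$ and let $\tau$ be a correct compositional translation from $\mathrm{SYNCSIMPLE}$ into $\mathrm{LOCKSIMPLE}_{2,IS}$ of blocking type $(P_1P_1,P_2P_2)$. Then: (1) the blocking prefix of $\tau(!)$ has the form $R_1P_1wT_2P_1$ with $w\in\{P_2,T_2\}^*$ and $R_1$ some word, and the blocking prefix of $\tau(?)$ has the form $R_3P_2w'T_1P_2$ with $w'\in\{P_1,T_1\}^*$ and $R_3$ some word; (2) $\tau(!)$ has a prefix in $\{T_1,P_1\}^*T_2$, and $\tau(?)$ has a prefix in $\{T_2,P_2\}^*T_1$.
   Context: $\mathrm{SYNCSIMPLE}$: subprocesses $\mathcal{U} ::= \checkmark \mid 0 \mid\, !\mathcal{U} \mid\, ?\mathcal{U}$; processes are finite parallel compositions ($\mid$ associative, commutative, $0$ a unit). Reduction: $!\mathcal{U}_1\mid ?\mathcal{U}_2\mid \mathcal{P}\to \mathcal{U}_1\mid\mathcal{U}_2\mid\mathcal{P}$. Successful: of form $\checkmark\mid\mathcal{P}$; may-convergent: reduces to a successful process; must-convergent: every reachable process is may-convergent. $\mathrm{LOCKSIMPLE}_{k,IS}$ ($IS\in\{\Box,\blacksquare\}^k$, $\Box$ empty, $\blacksquare$ full): subprocesses are words over $\{P_1,T_1,\dots,P_k,T_k\}$ followed by $0$ or $\checkmark$; states $(\mathcal{P},C)$ reduce by $(P_i\mathcal{U}\mid\mathcal{P},C)\to(\mathcal{U}\mid\mathcal{P},C[C_i:=\blacksquare])$ only if $C_i=\Box$,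 and $(T_i\mathcal{U}\mid\mathcal{P},C)\to(\mathcal{U}\mid\mathcal{P},C[C_i:=\Box])$ always. Success = process contains $\checkmark$; a process $\mathcal{P}$ is may/must-convergent iff the state $(\mathcal{P},IS)$ is. A compositional translation $\tau$ is given by words $\tau(!),\tau(?)$ with $\tau(0)=0$, $\tau(\checkmark)=\checkmark$, $\tau(!\mathcal{U})=\tau(!)\tau(\mathcal{U})$, $\tau(?\mathcal{U})=\tau(?)\tau(\mathcal{U})$, $\tau$ commuting with $\mid$; correct = preserves and reflects may- and must-convergence. Blocking prefix/type of a word $S$: execute $S$ alone as a single subprocess from store $IS$; if it gets stuck at an occurrence of $P_i$, the prefix ending with that occurrence is the blocking prefix; the type is $P_i$ if this occurrence is the first symbol from $\{P_i,T_i\}$ in $S$, and $P_iP_i$ otherwise (then the blocking prefix has form $R_1P_iR_2P_i$ with $R_2$ containing no $P_i,T_i$). $\tau$ has blocking type $(W_1,W_2)$ if $\tau(!)$ has type $W_1$ and $\tau(?)$ type $W_2$. $X^*$ denotes finite words over a symbol set $X$. *)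

theory Defs
  imports Main "HOL-Library.Multiset"
begin

datatype ssub = SCheck | SZero | SSend ssub | SRecv ssub

type_synonym sproc = "ssub multiset"

definition sync_step :: "sproc \<Rightarrow> sproc \<Rightarrow> bool" where
  "sync_step P Q \<longleftrightarrow> (\<exists>u1 u2 R. P = {#SSend u1, SRecv u2#} + R \<and> Q = {#u1, u2#} + R)"

definition sync_success :: "sproc \<Rightarrow> bool" where
  "sync_success P \<longleftrightarrow> SCheck \<in># P"

definition sync_may :: "sproc \<Rightarrow> bool" where
  "sync_may P \<longleftrightarrow> (\<exists>Q. sync_step\<^sup>*\<^sup>* P Q \<and> sync_success Q)"

definition sync_must :: "sproc \<Rightarrow> bool" where
  "sync_must P \<longleftrightarrow> (\<forall>Q. sync_step\<^sup>*\<^sup>* P Q \<longrightarrow> sync_may Q)"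

datatype lsym = LP nat | LT nat

text \<open>A subprocess: a word followed by 0 (False) or checkmark (True).\<close>
type_synonym lsub = "lsym list \<times> bool"
type_synonym lproc = "lsub multiset"
text \<open>Store: True = full, False = empty.\<close>
type_synonym store = "nat \<Rightarrow> bool"

definition lock_alphabet :: "nat \<Rightarrow> lsym set" where
  "lock_alphabet k = {LP i | i. 1 \<le> i \<and> i \<le> k} \<union> {LT i | i. 1 \<le> i \<and> i \<le> k}"

definition lock_step :: "lproc \<times> store \<Rightarrow> lproc \<times> store \<Rightarrow> bool" where
  "lock_step S S' \<longleftrightarrow>
     (\<exists>i u b R. fst S = {#(LP i # u, b)#} + R \<and> \<not> snd S i
        \<and> S' = ({#(u, b)#} + R, (snd S)(i := True))) \<or>
     (\<exists>i u b R. fst S = {#(LT i # u, b)#} + R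
        \<and> S' = ({#(u, b)#} + R, (snd S)(i := False)))"

definition lock_success :: "lproc \<times> store \<Rightarrow> bool" where
  "lock_success S \<longleftrightarrow> ([], True) \<in># fst S"

definition lock_may :: "lproc \<times> store \<Rightarrow> bool" where
  "lock_may S \<longleftrightarrow> (\<exists>S'. lock_step\<^sup>*\<^sup>* S S' \<and> lock_success S')"

definition lock_must :: "lproc \<times> store \<Rightarrow> bool" where
  "lock_must S \<longleftrightarrow> (\<forall>S'. lock_step\<^sup>*\<^sup>* S S' \<longrightarrow> lock_may S')"

fun trans_sub :: "lsym list \<Rightarrow> lsym list \<Rightarrow> ssub \<Rightarrow> lsub" where
  "trans_sub ts tr SCheck = ([], True)"
| "trans_sub ts tr SZero = ([], False)"
| "trans_sub ts tr (SSend u) = (ts @ fst (trans_sub ts tr u), snd (trans_sub ts tr u))"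
| "trans_sub ts tr (SRecv u) = (tr @ fst (trans_sub ts tr u), snd (trans_sub ts tr u))"

definition trans_proc :: "lsym list \<Rightarrow> lsym list \<Rightarrow> sproc \<Rightarrow> lproc" where
  "trans_proc ts tr P = image_mset (trans_sub ts tr) P"

text \<open>Translation given by the words ts = tau(!) and tr = tau(?) into LOCKSIMPLE_{k,IS}.\<close>
definition correct_translation :: "nat \<Rightarrow> store \<Rightarrow> lsym list \<Rightarrow> lsym list \<Rightarrow> bool" where
  "correct_translation k IS ts tr \<longleftrightarrow>
     set ts \<subseteq> lock_alphabet k \<and> set tr \<subseteq> lock_alphabet k \<and>
     (\<forall>P. (sync_may P \<longleftrightarrow> lock_may (trans_proc ts tr P, IS)) \<and>
          (sync_must P \<longleftrightarrow> lock_must (trans_proc ts tr P, IS)))"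

fun blocking_prefix :: "store \<Rightarrow> lsym list \<Rightarrow> lsym list option" where
  "blocking_prefix C [] = None"
| "blocking_prefix C (LP i # w) =
     (if C i then Some [LP i] else map_option (Cons (LP i)) (blocking_prefix (C(i := True)) w))"
| "blocking_prefix C (LT i # w) = map_option (Cons (LT i)) (blocking_prefix (C(i := False)) w)"

datatype btype = BT_P nat | BT_PP nat

definition sym_idx :: "lsym \<Rightarrow> nat" where
  "sym_idx s = (case s of LP i \<Rightarrow> i | LT i \<Rightarrow> i)"

definition blocking_type :: "store \<Rightarrow> lsym list \<Rightarrow> btype option" where
  "blocking_type C S =
     (case blocking_prefix C S of
        None \<Rightarrow> None
      | Some p \<Rightarrow> (let i = sym_idx (last p) in
          if (\<forall>s \<in> set (butlast p). sym_idx s \<noteq> i) then Some (BT_P i) else Some (BT_PP i)))"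

end

theory Submission
  imports Defs
begin

lemma find_app: "find P (xs @ ys) = (case find P xs of None \<Rightarrow> find P ys | Some s \<Rightarrow> Some s)"
  by (induction xs) auto

lemma find_dec: "find P xs = Some s \<Longrightarrow> \<exists>a b. xs = a @ s # b \<and> (\<forall>y\<in>set a. \<not> P y) \<and> P s"
proof (induction xs)
  case Nil then show ?case by simp
next
  case (Cons x xs)
  show ?case
  proof (cases "P x")
    case True then show ?thesis using Cons.prems by (intro exI[of _ "[]"] exI[of _ xs]) auto
  next
    case False
    then have "find P xs = Some s" using Cons.prems by simp
    then obtain a b where "xs = a @ s # b" "\<forall>y\<in>set a. \<not> P y" "P s" using Cons.IH by blast
    then show ?thesis using False by (intro exI[of _ "x # a"] exI[of _ b]) auto
  qed
qed

lemma find_rev_dec: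
  assumes "find P (rev xs) = Some s"
  shows "\<exists>a b. xs = a @ [s] @ b \<and> (\<forall>y\<in>set b. \<not> P y)"
proof -
  from find_dec[OF assms] obtain a b where h: "rev xs = a @ s # b" "\<forall>y\<in>set a. \<not> P y"
    by blast
  have "xs = rev (rev xs)" by simp
  also have "\<dots> = rev b @ [s] @ rev a" unfolding h(1) by simp
  finally show ?thesis using h(2) by (intro exI[of _ "rev b"] exI[of _ "rev a"]) simp
qed

fun exec :: "store \<Rightarrow> lsym list \<Rightarrow> store option" where
  "exec C [] = Some C"
| "exec C (LP i # w) = (if C i then None else exec (C(i := True)) w)"
| "exec C (LT i # w) = exec (C(i := False)) w"

lemma exec_append: "exec C (p @ q) = (case exec C p of None \<Rightarrow> None | Some C' \<Rightarrow> exec C' q)"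
proof (induction p arbitrary: C)
  case Nil then show ?case by simp
next
  case (Cons a w)
  show ?case
  proof (cases a)
    case (LP i) show ?thesis unfolding LP by (simp only: append_Cons exec.simps Cons.IH option.case split: if_split) blast
  next
    case (LT i) show ?thesis unfolding LT by (simp only: append_Cons exec.simps Cons.IH)
  qed
qed

lemma sym_idx_simps[simp]: "sym_idx (LP i) = i" "sym_idx (LT i) = i"
  by (simp_all add: sym_idx_def)

lemma exec_val: "exec C p = Some C' \<Longrightarrow>
   C' k = (case find (\<lambda>s. sym_idx s = k) (rev p) of None \<Rightarrow> C k | Some s \<Rightarrow> s = LP k)"
proof (induction p arbitrary: C)
  case Nil then show ?case by simp
next
  case (Cons a w)
  show ?case
  proof (cases a)
    case (LP i)
    then have e: "exec (C(i := True)) w = Some C'" using Cons.prems by (auto split: if_splits)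
    show ?thesis using Cons.IH[OF e] LP by (auto simp: find_app split: option.splits)
  next
    case (LT i)
    then have e: "exec (C(i := False)) w = Some C'" using Cons.prems by simp
    show ?thesis using Cons.IH[OF e] LT by (auto simp: find_app split: option.splits)
  qed
qed

lemma exec_frame: "exec C p = Some C' \<Longrightarrow> \<forall>s\<in>set p. sym_idx s \<noteq> k \<Longrightarrow> C' k = C k"
  using exec_val[of C p C' k] by (simp add: find_None_iff[THEN iffD2])

lemma exec_transfer: "exec C p = Some C' \<Longrightarrow>
   (\<forall>k. D k \<longrightarrow> C k \<or> find (\<lambda>s. sym_idx s = k) p \<noteq> Some (LP k)) \<Longrightarrow>
   \<exists>D'. exec D p = Some D' \<and> (\<forall>k. D' k = (if (\<exists>s\<in>set p. sym_idx s = k) then C' k else D k))"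
proof (induction p arbitrary: C D)
  case Nil then show ?case by simp
next
  case (Cons a w)
  show ?case
  proof (cases a)
    case (LP i)
    then have ci: "\<not> C i" and e: "exec (C(i := True)) w = Some C'" using Cons.prems(1) by (auto split: if_splits)
    have di: "\<not> D i" using Cons.prems(2)[rule_format, of i] ci LP by auto
    have "\<forall>k. (D(i:=True)) k \<longrightarrow> (C(i:=True)) k \<or> find (\<lambda>s. sym_idx s = k) w \<noteq> Some (LP k)"
    proof (intro allI impI)
      fix k assume dk: "(D(i:=True)) k"
      show "(C(i:=True)) k \<or> find (\<lambda>s. sym_idx s = k) w \<noteq> Some (LP k)"
      proof (cases "k = i")
        case True then show ?thesis using dk by simp
      next
        case False then have "D k" using dk by simp
        then show ?thesis using Cons.prems(2)[rule_format, of k] False LP by simp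
      qed
    qed
    then obtain D' where d: "exec (D(i:=True)) w = Some D'"
       "\<forall>k. D' k = (if (\<exists>s\<in>set w. sym_idx s = k) then C' k else (D(i:=True)) k)"
      using Cons.IH[OF e] by blast
    have ci': "\<not>(\<exists>s\<in>set w. sym_idx s = i) \<Longrightarrow> C' i = True" using exec_frame[OF e, of i] by auto
    have "exec D (a # w) = Some D'" using d(1) di LP by simp
    moreover have "\<forall>k. D' k = (if (\<exists>s\<in>set (a # w). sym_idx s = k) then C' k else D k)"
    proof
      fix k show "D' k = (if (\<exists>s\<in>set (a # w). sym_idx s = k) then C' k else D k)"
        using d(2)[rule_format, of k] ci' LP by (cases "k = i") auto
    qed
    ultimately show ?thesis by blast
  next
    case (LT i)
    then have e: "exec (C(i := False)) w = Some C'" using Cons.prems(1) by simp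
    have "\<forall>k. (D(i:=False)) k \<longrightarrow> (C(i:=False)) k \<or> find (\<lambda>s. sym_idx s = k) w \<noteq> Some (LP k)"
    proof (intro allI impI)
      fix k assume dk: "(D(i:=False)) k"
      show "(C(i:=False)) k \<or> find (\<lambda>s. sym_idx s = k) w \<noteq> Some (LP k)"
      proof (cases "k = i")
        case True then show ?thesis using dk by simp
      next
        case False then have "D k" using dk by simp
        then show ?thesis using Cons.prems(2)[rule_format, of k] False LT by simp
      qed
    qed
    then obtain D' where d: "exec (D(i:=False)) w = Some D'"
       "\<forall>k. D' k = (if (\<exists>s\<in>set w. sym_idx s = k) then C' k else (D(i:=False)) k)"
      using Cons.IH[OF e] by blast
    have ci': "\<not>(\<exists>s\<in>set w. sym_idx s = i) \<Longrightarrow> C' i = False" using exec_frame[OF e, of i] by auto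
    have "exec D (a # w) = Some D'" using d(1) LT by simp
    moreover have "\<forall>k. D' k = (if (\<exists>s\<in>set (a # w). sym_idx s = k) then C' k else D k)"
    proof
      fix k show "D' k = (if (\<exists>s\<in>set (a # w). sym_idx s = k) then C' k else D k)"
        using d(2)[rule_format, of k] ci' LT by (cases "k = i") auto
    qed
    ultimately show ?thesis by blast
  qed
qed


lemma exec_steps: "exec C p = Some C' \<Longrightarrow> lock_step\<^sup>*\<^sup>* (add_mset (p @ r, b) R, C) (add_mset (r, b) R, C')"
proof (induction p arbitrary: C)
  case Nil then show ?case by simp
next
  case (Cons a w)
  show ?case
  proof (cases a)
    case (LP i)
    then have ci: "\<not> C i" and e: "exec (C(i := True)) w = Some C'" using Cons.prems by (auto split: if_splits)
    have st: "lock_step (add_mset ((LP i # w) @ r, b) R, C) (add_mset (w @ r, b) R, C(i:=True))"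
      unfolding lock_step_def by (intro disjI1 exI[of _ i] exI[of _ "w @ r"] exI[of _ b] exI[of _ R]) (simp add: ci)
    show ?thesis unfolding LP by (rule converse_rtranclp_into_rtranclp[OF st Cons.IH[OF e]])
  next
    case (LT i)
    then have e: "exec (C(i := False)) w = Some C'" using Cons.prems by simp
    have st: "lock_step (add_mset ((LT i # w) @ r, b) R, C) (add_mset (w @ r, b) R, C(i:=False))"
      unfolding lock_step_def by (intro disjI2 exI[of _ i] exI[of _ "w @ r"] exI[of _ b] exI[of _ R]) simp
    show ?thesis unfolding LT by (rule converse_rtranclp_into_rtranclp[OF st Cons.IH[OF e]])
  qed
qed

lemma stepX: "exec C p = Some C' \<Longrightarrow> lock_step\<^sup>*\<^sup>* ({#(p @ r, b1), (s, b2)#}, C) ({#(r, b1), (s, b2)#}, C')"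
  using exec_steps[of C p C' r b1 "{#(s,b2)#}"] by simp

lemma stepY: "exec C p = Some C' \<Longrightarrow> lock_step\<^sup>*\<^sup>* ({#(s, b1), (p @ r, b2)#}, C) ({#(s, b1), (r, b2)#}, C')"
  using exec_steps[of C p C' r b2 "{#(s,b1)#}"] by (simp add: add_mset_commute)

lemma no_step:
  assumes "\<forall>a\<in>#M. fst a = [] \<or> (\<exists>k r. fst a = LP k # r \<and> C k)"
  shows "\<not> lock_step (M, C) S'"
proof
  assume "lock_step (M,C) S'"
  then consider (P) i u b R where "M = {#(LP i # u, b)#} + R" "\<not> C i"
    | (T) i u b R where "M = {#(LT i # u, b)#} + R" unfolding lock_step_def by auto
  then show False
  proof cases
    case P then have "(LP i # u, b) \<in># M" by simp
    with assms P(2) show False by auto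
  next
    case T then have "(LT i # u, b) \<in># M" by simp
    with assms show False by auto
  qed
qed

lemma not_may: "(\<And>S'. \<not> lock_step S S') \<Longrightarrow> \<not> lock_success S \<Longrightarrow> \<not> lock_may S"
  unfolding lock_may_def by (metis converse_rtranclpE)

lemma dead2: "C i \<Longrightarrow> C j \<Longrightarrow> \<not> lock_may ({#(LP i # r1, b1), (LP j # r2, b2)#}, C)"
  apply (rule not_may)
   apply (rule no_step)
   apply auto[1]
  apply (simp add: lock_success_def)
  done

fun runmax :: "store \<Rightarrow> lsym list \<Rightarrow> lsym list \<times> store" where
  "runmax C [] = ([], C)"
| "runmax C (LP i # w) = (if C i then (LP i # w, C) else runmax (C(i := True)) w)"
| "runmax C (LT i # w) = runmax (C(i := False)) w"

lemma runmax_prop: "runmax C w = (r, C') \<Longrightarrow>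
   (\<exists>p. w = p @ r \<and> exec C p = Some C') \<and> (r = [] \<or> (\<exists>k r'. r = LP k # r' \<and> C' k))"
proof (induction w arbitrary: C)
  case Nil then show ?case by simp
next
  case (Cons a w)
  show ?case
  proof (cases a)
    case (LP i)
    show ?thesis
    proof (cases "C i")
      case True
      then have "r = LP i # w" "C' = C" using Cons.prems LP by auto
      then show ?thesis using True LP by (intro conjI exI[of _ "[]"]) auto
    next
      case False
      then have e: "runmax (C(i := True)) w = (r, C')" using Cons.prems LP by simp
      from Cons.IH[OF e] obtain p where "w = p @ r" "exec (C(i := True)) p = Some C'"
        "r = [] \<or> (\<exists>k r'. r = LP k # r' \<and> C' k)" by blast
      then show ?thesis using False LP by (intro conjI exI[of _ "LP i # p"]) auto
    qed
  next
    case (LT i)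
    then have e: "runmax (C(i := False)) w = (r, C')" using Cons.prems by simp
    from Cons.IH[OF e] obtain p where "w = p @ r" "exec (C(i := False)) p = Some C'"
      "r = [] \<or> (\<exists>k r'. r = LP k # r' \<and> C' k)" by blast
    then show ?thesis using LT by (intro conjI exI[of _ "LT i # p"]) auto
  qed
qed

lemma runmax_keep: "runmax C w = (r, C') \<Longrightarrow> find (\<lambda>s. sym_idx s = j) w \<noteq> Some (LT j) \<Longrightarrow> C j \<Longrightarrow> C' j"
proof (induction w arbitrary: C)
  case Nil then show ?case by simp
next
  case (Cons a w)
  show ?case
  proof (cases a)
    case (LP i)
    show ?thesis
    proof (cases "C i")
      case True
      then show ?thesis using Cons.prems LP by auto
    next
      case False
      then have e: "runmax (C(i := True)) w = (r, C')" using Cons.prems LP by simp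
      have ij: "i \<noteq> j" using False Cons.prems(3) by auto
      then have "find (\<lambda>s. sym_idx s = j) w \<noteq> Some (LT j)" using Cons.prems(2) LP by simp
      moreover have "(C(i := True)) j" using ij Cons.prems(3) by simp
      ultimately show ?thesis using Cons.IH[OF e] by blast
    qed
  next
    case (LT i)
    then have e: "runmax (C(i := False)) w = (r, C')" using Cons.prems by simp
    have ij: "i \<noteq> j" using Cons.prems(2) LT by auto
    then have "find (\<lambda>s. sym_idx s = j) w \<noteq> Some (LT j)" using Cons.prems(2) LT by simp
    moreover have "(C(i := False)) j" using ij Cons.prems(3) by simp
    ultimately show ?thesis using Cons.IH[OF e] by blast
  qed
qed

lemma bp_dec: "blocking_prefix C w = Some q \<Longrightarrow>
   \<exists>p k r C'. q = p @ [LP k] \<and> w = p @ LP k # r \<and> exec C p = Some C' \<and> C' k"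
proof (induction w arbitrary: C q)
  case Nil then show ?case by simp
next
  case (Cons a w)
  show ?case
  proof (cases a)
    case (LP i)
    show ?thesis
    proof (cases "C i")
      case True
      then have "q = [LP i]" using Cons.prems LP by simp
      then show ?thesis using True LP by (intro exI[of _ "[]"] exI[of _ i] exI[of _ w] exI[of _ C]) simp
    next
      case False
      then obtain q' where e: "blocking_prefix (C(i := True)) w = Some q'" and q: "q = LP i # q'"
        using Cons.prems LP by auto
      from Cons.IH[OF e] obtain p k r C' where "q' = p @ [LP k]" "w = p @ LP k # r"
        "exec (C(i := True)) p = Some C'" "C' k" by blast
      then show ?thesis using False LP q
        by (intro exI[of _ "LP i # p"] exI[of _ k] exI[of _ r] exI[of _ C']) simp
    qed
  next
    case (LT i)
    then obtain q' where e: "blocking_prefix (C(i := False)) w = Some q'" and q: "q = LT i # q'"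
      using Cons.prems by auto
    from Cons.IH[OF e] obtain p k r C' where "q' = p @ [LP k]" "w = p @ LP k # r"
      "exec (C(i := False)) p = Some C'" "C' k" by blast
    then show ?thesis using LT q
      by (intro exI[of _ "LT i # p"] exI[of _ k] exI[of _ r] exI[of _ C']) simp
  qed
qed

lemma bt_dec:
  assumes "blocking_type C w = Some (BT_PP i)"
  shows "\<exists>p r C'. blocking_prefix C w = Some (p @ [LP i]) \<and> w = p @ LP i # r \<and> exec C p = Some C' \<and> C' i
     \<and> (\<exists>s\<in>set p. sym_idx s = i)"
proof (cases "blocking_prefix C w")
  case None then show ?thesis using assms by (simp add: blocking_type_def)
next
  case (Some q)
  from bp_dec[OF Some] obtain p k r C' where h: "q = p @ [LP k]" "w = p @ LP k # r" "exec C p = Some C'" "C' k"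
    by blast
  have "(if (\<forall>s \<in> set p. sym_idx s \<noteq> k) then Some (BT_P k) else Some (BT_PP k)) = Some (BT_PP i)"
    using assms Some h(1) by (simp add: blocking_type_def Let_def)
  then have "k = i" "\<not> (\<forall>s \<in> set p. sym_idx s \<noteq> k)" by (auto split: if_splits)
  then show ?thesis using h Some by blast
qed


lemma must_reach: "lock_must S0 \<Longrightarrow> lock_step\<^sup>*\<^sup>* S0 S \<Longrightarrow> lock_may S"
  by (cases S) (simp add: lock_must_def)

lemma core2:
  assumes y: "y = py @ LP j # ry" "exec IS py = Some Cy" "Cy j"
    and must: "lock_must ({#(x,False),(y,True)#}, IS)"
  shows "find (\<lambda>s. sym_idx s = j) x = Some (LT j)"
proof (rule ccontr)
  assume nf: "find (\<lambda>s. sym_idx s = j) x \<noteq> Some (LT j)"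
  obtain r C' where rm: "runmax Cy x = (r, C')" by (cases "runmax Cy x") auto
  from runmax_prop[OF rm] obtain p where p: "x = p @ r" "exec Cy p = Some C'"
    and st: "r = [] \<or> (\<exists>k r'. r = LP k # r' \<and> C' k)" by blast
  have cj: "C' j" using runmax_keep[OF rm nf y(3)] .
  have r1: "lock_step\<^sup>*\<^sup>* ({#(x,False),(y,True)#}, IS) ({#(x,False),(LP j # ry,True)#}, Cy)"
    using stepY[OF y(2), of x False "LP j # ry" True] y(1) by simp
  have r2: "lock_step\<^sup>*\<^sup>* ({#(x,False),(LP j # ry,True)#}, Cy) ({#(r,False),(LP j # ry,True)#}, C')"
    using stepX[OF p(2), of r False "LP j # ry" True] p(1) by simp
  have "\<not> lock_may ({#(r,False),(LP j # ry,True)#}, C')"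
    apply (rule not_may)
     apply (rule no_step)
    using st cj apply auto[1]
    apply (simp add: lock_success_def)
    done
  then show False using must_reach[OF must rtranclp_trans[OF r1 r2]] by simp
qed

abbreviation alph :: "nat \<Rightarrow> nat \<Rightarrow> lsym set" where
  "alph i j \<equiv> {LP i, LT i, LP j, LT j}"

lemma trans_cond:
  assumes "set p \<subseteq> alph i j"
    and "D i \<longrightarrow> C i \<or> find (\<lambda>s. sym_idx s = i) p \<noteq> Some (LP i)"
    and "D j \<longrightarrow> C j \<or> find (\<lambda>s. sym_idx s = j) p \<noteq> Some (LP j)"
  shows "\<forall>k. D k \<longrightarrow> C k \<or> find (\<lambda>s. sym_idx s = k) p \<noteq> Some (LP k)"
proof (intro allI impI)
  fix k assume "D k"
  show "C k \<or> find (\<lambda>s. sym_idx s = k) p \<noteq> Some (LP k)"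
  proof (cases "k = i \<or> k = j")
    case True then show ?thesis using assms \<open>D k\<close> by auto
  next
    case False
    then have "find (\<lambda>s. sym_idx s = k) p = None" using assms(1) by (auto simp: find_None_iff)
    then show ?thesis by simp
  qed
qed

lemma find_mem:
  assumes "find P xs = Some s" shows "s \<in> set xs \<and> P s"
proof -
  from find_dec[OF assms] obtain a b where "xs = a @ s # b" "P s" by blast
  then show ?thesis by simp
qed

lemma alph_j: "s \<in> alph i j \<Longrightarrow> i \<noteq> j \<Longrightarrow> sym_idx s = j \<Longrightarrow> s = LP j \<or> s = LT j"
  by auto

lemma alph_i: "s \<in> alph i j \<Longrightarrow> sym_idx s \<noteq> j \<Longrightarrow> s = LP i \<or> s = LT i"
  by auto

lemma has_find_rev: "\<exists>s\<in>set p. P s \<Longrightarrow> \<exists>s. find P (rev p) = Some s"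
  by (metis find_None_iff option.exhaust set_rev)

lemma core1:
  assumes ij: "i \<noteq> j"
    and ax: "set x \<subseteq> alph i j" and ay: "set y \<subseteq> alph i j"
    and x: "x = px @ LP i # rx" "exec IS px = Some Cx" "Cx i" "\<exists>s\<in>set px. sym_idx s = i"
    and y: "y = py @ LP j # ry" "exec IS py = Some Cy" "Cy j" "\<exists>s\<in>set py. sym_idx s = j"
    and fx: "find (\<lambda>s. sym_idx s = j) x = Some (LT j)"
    and fy: "find (\<lambda>s. sym_idx s = i) y = Some (LT i)"
    and must: "lock_must ({#(x,bX),(y,bY)#}, IS)"
    and neg: "last px \<noteq> LT j"
  shows False
proof -
  have fxp: "find (\<lambda>s. sym_idx s = j) px \<noteq> Some (LP j)"
    using fx x(1) by (auto simp: find_app split: option.splits)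
  have fyp: "find (\<lambda>s. sym_idx s = i) py \<noteq> Some (LP i)"
    using fy y(1) by (auto simp: find_app split: option.splits)
  have apx: "set px \<subseteq> alph i j" using ax x(1) by auto
  have apy: "set py \<subseteq> alph i j" using ay y(1) by auto
  have dead: "\<not> lock_may ({#(LP i # r1, b1), (LP j # r2, b2)#}, D)" if "D i" "D j" for r1 b1 r2 b2 D
    using dead2[OF that] .
  show False
  proof (cases "find (\<lambda>s. sym_idx s = j) (rev px) = Some (LT j)")
    case I: True
    have "px \<noteq> []" using x(4) by auto
    then obtain \<delta> s where pxd: "px = \<delta> @ [s]" by (metis rev_exhaust)
    have "s \<noteq> LT j" using neg pxd by simp
    have sa: "s \<in> alph i j" using apx pxd by auto
    have rpx: "rev px = s # rev \<delta>" using pxd by simp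
    have sj: "sym_idx s \<noteq> j"
    proof
      assume "sym_idx s = j"
      then have "find (\<lambda>s. sym_idx s = j) (rev px) = Some s" using rpx by simp
      then show False using I \<open>s \<noteq> LT j\<close> by simp
    qed
    then have si: "sym_idx s = i" using sa by auto
    have "Cx i = (s = LP i)" using exec_val[OF x(2), of i] rpx si by simp
    then have s: "s = LP i" using x(3) by simp
    have fd: "find (\<lambda>s. sym_idx s = j) (rev \<delta>) = Some (LT j)" using I rpx sj by simp
    obtain Cd where ed: "exec IS \<delta> = Some Cd" and "exec Cd [LP i] = Some Cx"
      using x(2) pxd s by (auto simp: exec_append split: option.splits)
    then have ncd: "\<not> Cd i" by (auto split: if_splits)
    have cdj: "\<not> Cd j" using exec_val[OF ed, of j] fd by simp
    have cxj: "\<not> Cx j" using exec_val[OF x(2), of j] I by simp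
    have ad: "set \<delta> \<subseteq> alph i j" using apx pxd by auto
    show False
    proof (cases "find (\<lambda>s. sym_idx s = i) (rev py) = Some (LP i)")
      case True
      have "\<forall>k. Cx k \<longrightarrow> IS k \<or> find (\<lambda>s. sym_idx s = k) py \<noteq> Some (LP k)"
        by (rule trans_cond[OF apy]) (use fyp cxj in auto)
      from exec_transfer[OF y(2) this] obtain D' where d: "exec Cx py = Some D'"
        "\<forall>k. D' k = (if (\<exists>s\<in>set py. sym_idx s = k) then Cy k else Cx k)" by blast
      have "LP i \<in> set py" using find_mem[OF True] by simp
      then have hi: "\<exists>s\<in>set py. sym_idx s = i" by (intro bexI[of _ "LP i"]) simp_all
      have "Cy i" using exec_val[OF y(2), of i] True by simp
      then have d1: "D' i" using d(2) hi by simp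
      have d2: "D' j" using d(2) y(3) y(4) by simp
      have r1: "lock_step\<^sup>*\<^sup>* ({#(x,bX),(y,bY)#}, IS) ({#(LP i # rx,bX),(y,bY)#}, Cx)"
        using stepX[OF x(2), of "LP i # rx" bX y bY] x(1) by simp
      have r2: "lock_step\<^sup>*\<^sup>* ({#(LP i # rx,bX),(y,bY)#}, Cx) ({#(LP i # rx,bX),(LP j # ry,bY)#}, D')"
        using stepY[OF d(1), of "LP i # rx" bX "LP j # ry" bY] y(1) by simp
      show False using must_reach[OF must rtranclp_trans[OF r1 r2]] dead[OF d1 d2] by simp
    next
      case False
      have "\<forall>k. Cd k \<longrightarrow> IS k \<or> find (\<lambda>s. sym_idx s = k) py \<noteq> Some (LP k)"
        by (rule trans_cond[OF apy]) (use fyp cdj in auto)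
      from exec_transfer[OF y(2) this] obtain D' where d: "exec Cd py = Some D'"
        "\<forall>k. D' k = (if (\<exists>s\<in>set py. sym_idx s = k) then Cy k else Cd k)" by blast
      have d2: "D' j" using d(2) y(3) y(4) by simp
      have nd1: "\<not> D' i"
      proof (cases "\<exists>s\<in>set py. sym_idx s = i")
        case True
        then obtain s' where fs: "find (\<lambda>s. sym_idx s = i) (rev py) = Some s'" using has_find_rev[of py "\<lambda>s. sym_idx s = i"] by blast
        then have "s' \<noteq> LP i" using False by simp
        then have "\<not> Cy i" using exec_val[OF y(2), of i] fs by simp
        then show ?thesis using d(2) True by simp
      next
        case False
        then show ?thesis using d(2) ncd by simp
      qed
      have e3: "exec D' [LP i] = Some (D'(i := True))" using nd1 by simp
      have r1: "lock_step\<^sup>*\<^sup>* ({#(x,bX),(y,bY)#}, IS) ({#(LP i # LP i # rx,bX),(y,bY)#}, Cd)"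
        using stepX[OF ed, of "LP i # LP i # rx" bX y bY] x(1) pxd s by simp
      have r2: "lock_step\<^sup>*\<^sup>* ({#(LP i # LP i # rx,bX),(y,bY)#}, Cd) ({#(LP i # LP i # rx,bX),(LP j # ry,bY)#}, D')"
        using stepY[OF d(1), of "LP i # LP i # rx" bX "LP j # ry" bY] y(1) by simp
      have r3: "lock_step\<^sup>*\<^sup>* ({#(LP i # LP i # rx,bX),(LP j # ry,bY)#}, D') ({#(LP i # rx,bX),(LP j # ry,bY)#}, D'(i := True))"
        using stepX[OF e3, of "LP i # rx" bX "LP j # ry" bY] by simp
      have "(D'(i := True)) i" "(D'(i := True)) j" using d2 ij by auto
      then have dd: "\<not> lock_may ({#(LP i # rx,bX),(LP j # ry,bY)#}, D'(i := True))" by (rule dead)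
      show False using must_reach[OF must rtranclp_trans[OF rtranclp_trans[OF r1 r2] r3]] dd by simp
    qed
  next
    case II: False
    show False
    proof (cases "Cy i \<longrightarrow> IS i \<or> find (\<lambda>s. sym_idx s = i) px \<noteq> Some (LP i)")
      case True
      have "\<forall>k. Cy k \<longrightarrow> IS k \<or> find (\<lambda>s. sym_idx s = k) px \<noteq> Some (LP k)"
        by (rule trans_cond[OF apx]) (use True fxp in auto)
      from exec_transfer[OF x(2) this] obtain D' where d: "exec Cy px = Some D'"
        "\<forall>k. D' k = (if (\<exists>s\<in>set px. sym_idx s = k) then Cx k else Cy k)" by blast
      have d1: "D' i" using d(2) x(3) x(4) by simp
      have d2: "D' j"
      proof (cases "\<exists>s\<in>set px. sym_idx s = j")
        case True
        then obtain s' where fs: "find (\<lambda>s. sym_idx s = j) (rev px) = Some s'" using has_find_rev[of px "\<lambda>s. sym_idx s = j"] by blast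
        then have "s' \<in> alph i j" "sym_idx s' = j" using find_mem[OF fs] apx by auto
        then have "s' = LP j" using II fs ij by auto
        then have "Cx j" using exec_val[OF x(2), of j] fs by simp
        then show ?thesis using d(2) True by simp
      next
        case False
        then show ?thesis using d(2) y(3) by simp
      qed
      have r1: "lock_step\<^sup>*\<^sup>* ({#(x,bX),(y,bY)#}, IS) ({#(x,bX),(LP j # ry,bY)#}, Cy)"
        using stepY[OF y(2), of x bX "LP j # ry" bY] y(1) by simp
      have r2: "lock_step\<^sup>*\<^sup>* ({#(x,bX),(LP j # ry,bY)#}, Cy) ({#(LP i # rx,bX),(LP j # ry,bY)#}, D')"
        using stepX[OF d(1), of "LP i # rx" bX "LP j # ry" bY] x(1) by simp
      show False using must_reach[OF must rtranclp_trans[OF r1 r2]] dead[OF d1 d2] by simp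
    next
      case False
      then have cyi: "Cy i" and nisi: "\<not> IS i" and fpi: "find (\<lambda>s. sym_idx s = i) px = Some (LP i)" by auto
      from find_dec[OF fpi] obtain \<gamma> \<gamma>' where pg: "px = \<gamma> @ LP i # \<gamma>'" and gi: "\<forall>s\<in>set \<gamma>. sym_idx s \<noteq> i"
        by blast
      obtain Cg where eg: "exec IS \<gamma> = Some Cg"
        using x(2) pg by (auto simp: exec_append split: option.splits)
      have cgi: "\<not> Cg i" using exec_frame[OF eg gi] nisi by simp
      have fg: "find (\<lambda>s. sym_idx s = j) \<gamma> \<noteq> Some (LP j)"
        using fxp pg by (auto simp: find_app split: option.splits)
      have ag: "set \<gamma> \<subseteq> alph i j" using apx pg by auto
      have fgi: "find (\<lambda>s. sym_idx s = i) \<gamma> = None" using gi by (auto simp: find_None_iff)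
      have xg: "x = \<gamma> @ (LP i # \<gamma>' @ LP i # rx)" using x(1) pg by simp
      show False
      proof (cases "find (\<lambda>s. sym_idx s = j) (rev \<gamma>) = Some (LT j)")
        case False
        have "\<forall>k. Cy k \<longrightarrow> IS k \<or> find (\<lambda>s. sym_idx s = k) \<gamma> \<noteq> Some (LP k)"
          by (rule trans_cond[OF ag]) (use fgi fg in auto)
        from exec_transfer[OF eg this] obtain D' where d: "exec Cy \<gamma> = Some D'"
          "\<forall>k. D' k = (if (\<exists>s\<in>set \<gamma>. sym_idx s = k) then Cg k else Cy k)" by blast
        have d1: "D' i" using d(2) gi cyi by auto
        have d2: "D' j"
        proof (cases "\<exists>s\<in>set \<gamma>. sym_idx s = j")
          case True
          then obtain s' where fs: "find (\<lambda>s. sym_idx s = j) (rev \<gamma>) = Some s'" using has_find_rev[of \<gamma> "\<lambda>s. sym_idx s = j"] by blast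
          then have "s' \<in> alph i j" "sym_idx s' = j" using find_mem[OF fs] ag by auto
          then have "s' = LP j" using False fs ij by auto
          then have "Cg j" using exec_val[OF eg, of j] fs by simp
          then show ?thesis using d(2) True by simp
        next
          case False
          then show ?thesis using d(2) y(3) by simp
        qed
        have r1: "lock_step\<^sup>*\<^sup>* ({#(x,bX),(y,bY)#}, IS) ({#(x,bX),(LP j # ry,bY)#}, Cy)"
          using stepY[OF y(2), of x bX "LP j # ry" bY] y(1) by simp
        have r2: "lock_step\<^sup>*\<^sup>* ({#(x,bX),(LP j # ry,bY)#}, Cy) ({#(LP i # \<gamma>' @ LP i # rx,bX),(LP j # ry,bY)#}, D')"
          using stepX[OF d(1), of "LP i # \<gamma>' @ LP i # rx" bX "LP j # ry" bY] xg by simp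
        show False using must_reach[OF must rtranclp_trans[OF r1 r2]] dead[OF d1 d2] by simp
      next
        case True
        have cgj: "\<not> Cg j" using exec_val[OF eg, of j] True by simp
        have "\<forall>k. Cg k \<longrightarrow> IS k \<or> find (\<lambda>s. sym_idx s = k) py \<noteq> Some (LP k)"
          by (rule trans_cond[OF apy]) (use cgi cgj in auto)
        from exec_transfer[OF y(2) this] obtain D' where d: "exec Cg py = Some D'"
          "\<forall>k. D' k = (if (\<exists>s\<in>set py. sym_idx s = k) then Cy k else Cg k)" by blast
        have d2: "D' j" using d(2) y(3) y(4) by simp
        have hi: "\<exists>s\<in>set py. sym_idx s = i"
        proof (rule ccontr)
          assume "\<not> (\<exists>s\<in>set py. sym_idx s = i)"
          then have "Cy i = IS i" using exec_frame[OF y(2)] by auto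
          then show False using cyi nisi by simp
        qed
        have d1: "D' i" using d(2) hi cyi by simp
        have r1: "lock_step\<^sup>*\<^sup>* ({#(x,bX),(y,bY)#}, IS) ({#(LP i # \<gamma>' @ LP i # rx,bX),(y,bY)#}, Cg)"
          using stepX[OF eg, of "LP i # \<gamma>' @ LP i # rx" bX y bY] xg by simp
        have r2: "lock_step\<^sup>*\<^sup>* ({#(LP i # \<gamma>' @ LP i # rx,bX),(y,bY)#}, Cg) ({#(LP i # \<gamma>' @ LP i # rx,bX),(LP j # ry,bY)#}, D')"
          using stepY[OF d(1), of "LP i # \<gamma>' @ LP i # rx" bX "LP j # ry" bY] y(1) by simp
        show False using must_reach[OF must rtranclp_trans[OF r1 r2]] dead[OF d1 d2] by simp
      qed
    qed
  qed
qed


lemma sub_helper: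
  assumes "set w \<subseteq> alph i j" "\<forall>y\<in>set w. sym_idx y \<noteq> i"
  shows "set w \<subseteq> {LP j, LT j}"
proof
  fix y assume "y \<in> set w"
  then have "y \<in> alph i j" "sym_idx y \<noteq> i" using assms by auto
  then show "y \<in> {LP j, LT j}" by (cases y) auto
qed

lemma form1:
  assumes ij: "i \<noteq> j" and ap: "set p \<subseteq> alph i j" and lp: "last p = LT j"
    and hp: "\<exists>s\<in>set p. sym_idx s = i" and ep: "exec C p = Some C'" and ci: "C' i"
  shows "\<exists>R1 w. p = R1 @ [LP i] @ w @ [LT j] \<and> set w \<subseteq> {LP j, LT j}"
proof -
  have "p \<noteq> []" using hp by auto
  then obtain q where pq': "p = q @ [LT j]" using lp by (metis append_butlast_last_id)
  have hq: "\<exists>s\<in>set q. sym_idx s = i" using hp pq' ij by auto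
  obtain s' where fs: "find (\<lambda>s. sym_idx s = i) (rev q) = Some s'"
    using has_find_rev[of q "\<lambda>s. sym_idx s = i"] hq by blast
  have "find (\<lambda>s. sym_idx s = i) (rev p) = Some s'" using fs pq' ij by simp
  then have "C' i = (s' = LP i)" using exec_val[OF ep, of i] by simp
  then have s': "s' = LP i" using ci by simp
  from find_rev_dec[OF fs] obtain R1 w where qd: "q = R1 @ [s'] @ w" and wi: "\<forall>y\<in>set w. sym_idx y \<noteq> i"
    by blast
  have "set w \<subseteq> set p" using pq' qd by auto
  then have "set w \<subseteq> alph i j" using ap by blast
  then have "set w \<subseteq> {LP j, LT j}" using wi by (rule sub_helper)
  then show ?thesis using pq' qd s' by (intro exI[of _ R1] exI[of _ w]) simp
qed

lemma form2:
  assumes "find (\<lambda>s. sym_idx s = j) x = Some (LT j)" "set x \<subseteq> alph i j"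
  shows "\<exists>v z. x = v @ [LT j] @ z \<and> set v \<subseteq> {LT i, LP i}"
proof -
  from find_dec[OF assms(1)] obtain a b where ab: "x = a @ LT j # b" "\<forall>y\<in>set a. sym_idx y \<noteq> j" by blast
  have "set a \<subseteq> set x" using ab(1) by auto
  then have "set a \<subseteq> alph j i" using assms(2) by blast
  then have "set a \<subseteq> {LP i, LT i}" using ab(2) by (rule sub_helper)
  then show ?thesis using ab(1) by (intro exI[of _ a] exI[of _ b]) auto
qed

lemma sync_step_pair:
  "sync_step {#SSend u1, SRecv u2#} Q \<Longrightarrow> Q = {#u1, u2#}"
proof -
  assume "sync_step {#SSend u1, SRecv u2#} Q"
  then obtain v1 v2 R where h: "{#SSend u1, SRecv u2#} = {#SSend v1, SRecv v2#} + R" "Q = {#v1, v2#} + R"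
    unfolding sync_step_def by blast
  have "size R = 0" using arg_cong[OF h(1), of size] by simp
  then have "R = {#}" by simp
  then have "{#SSend u1, SRecv u2#} = {#SSend v1, SRecv v2#}" using h(1) by simp
  then have "v1 = u1 \<and> v2 = u2" by (auto simp: add_eq_conv_ex)
  then show ?thesis using h(2) \<open>R = {#}\<close> by simp
qed

lemma sync_no_step:
  assumes "\<forall>v. u1 \<noteq> SSend v" "\<forall>v. u2 \<noteq> SSend v"
  shows "\<not> sync_step {#u1, u2#} Q"
proof
  assume "sync_step {#u1, u2#} Q"
  then obtain v1 v2 R where h: "{#u1, u2#} = {#SSend v1, SRecv v2#} + R"
    unfolding sync_step_def by blast
  then have "SSend v1 \<in># {#u1, u2#}" by simp
  then show False using assms by auto
qed

lemma sync_must_ex: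
  assumes c: "SCheck = u1 \<or> SCheck = u2" and n: "\<forall>v. u1 \<noteq> SSend v" "\<forall>v. u2 \<noteq> SSend v"
  shows "sync_must {#SSend u1, SRecv u2#}"
  unfolding sync_must_def
proof (intro allI impI)
  fix Q assume "sync_step\<^sup>*\<^sup>* {#SSend u1, SRecv u2#} Q"
  then have q: "Q = {#SSend u1, SRecv u2#} \<or> Q = {#u1, u2#}"
  proof (induction rule: rtranclp_induct)
    case base then show ?case by simp
  next
    case (step Q1 Q2)
    then show ?case using sync_step_pair sync_no_step[OF n] by blast
  qed
  have s: "sync_success {#u1, u2#}" using c by (auto simp: sync_success_def)
  have st: "sync_step {#SSend u1, SRecv u2#} {#u1, u2#}"
    unfolding sync_step_def by (intro exI[of _ u1] exI[of _ u2] exI[of _ "{#}"]) simp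
  show "sync_may Q" using q
  proof
    assume "Q = {#SSend u1, SRecv u2#}"
    then show ?thesis unfolding sync_may_def using st s by blast
  next
    assume "Q = {#u1, u2#}"
    then show ?thesis unfolding sync_may_def using s by blast
  qed
qed

lemma lock_alphabet_2: "lock_alphabet 2 = {LP 1, LT 1, LP 2, LT 2}"
proof -
  have "\<And>i::nat. (1 \<le> i \<and> i \<le> 2) = (i = 1 \<or> i = 2)" by auto
  then show ?thesis unfolding lock_alphabet_def by auto
qed

theorem lemma5p2:
  fixes IS :: store and ts tr :: "lsym list"
  assumes "correct_translation 2 IS ts tr"
    and "blocking_type IS ts = Some (BT_PP 1)"
    and "blocking_type IS tr = Some (BT_PP 2)"
  shows "(\<exists>R1 w. blocking_prefix IS ts = Some (R1 @ [LP 1] @ w @ [LT 2, LP 1])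
                 \<and> set w \<subseteq> {LP 2, LT 2})
       \<and> (\<exists>R3 w'. blocking_prefix IS tr = Some (R3 @ [LP 2] @ w' @ [LT 1, LP 2])
                 \<and> set w' \<subseteq> {LP 1, LT 1})
       \<and> (\<exists>v z. ts = v @ [LT 2] @ z \<and> set v \<subseteq> {LT 1, LP 1})
       \<and> (\<exists>v z. tr = v @ [LT 1] @ z \<and> set v \<subseteq> {LT 2, LP 2})"
proof -
  have ct: "set ts \<subseteq> lock_alphabet 2" "set tr \<subseteq> lock_alphabet 2"
    "\<And>P. sync_must P \<longleftrightarrow> lock_must (trans_proc ts tr P, IS)"
    using assms(1) unfolding correct_translation_def by blast+
  have a12: "set ts \<subseteq> alph 1 2" "set tr \<subseteq> alph 1 2" using ct(1,2) lock_alphabet_2 by auto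
  have a21: "set ts \<subseteq> alph 2 1" "set tr \<subseteq> alph 2 1" using a12 by auto
  have "sync_must {#SSend SZero, SRecv SCheck#}" by (rule sync_must_ex) auto
  then have m1: "lock_must ({#(ts, False), (tr, True)#}, IS)"
    using ct(3) by (simp add: trans_proc_def)
  have "sync_must {#SSend SCheck, SRecv SZero#}" by (rule sync_must_ex) auto
  then have "lock_must ({#(ts, True), (tr, False)#}, IS)"
    using ct(3) by (simp add: trans_proc_def)
  then have m2: "lock_must ({#(tr, False), (ts, True)#}, IS)" by (simp add: add_mset_commute)
  from bt_dec[OF assms(2)] obtain px rx Cx where x: "blocking_prefix IS ts = Some (px @ [LP 1])"
    "ts = px @ LP 1 # rx" "exec IS px = Some Cx" "Cx 1" "\<exists>s\<in>set px. sym_idx s = 1" by blast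
  from bt_dec[OF assms(3)] obtain py ry Cy where y: "blocking_prefix IS tr = Some (py @ [LP 2])"
    "tr = py @ LP 2 # ry" "exec IS py = Some Cy" "Cy 2" "\<exists>s\<in>set py. sym_idx s = 2" by blast
  have f1: "find (\<lambda>s. sym_idx s = 2) ts = Some (LT 2)"
    by (rule core2[OF y(2) y(3) y(4) m1])
  have f2: "find (\<lambda>s. sym_idx s = 1) tr = Some (LT 1)"
    by (rule core2[OF x(2) x(3) x(4) m2])
  have l1: "last px = LT 2"
  proof (rule ccontr)
    assume "last px \<noteq> LT 2"
    then show False
      using core1[of 1 2 ts tr px rx IS Cx py ry Cy, OF _ a12 x(2-5) y(2-5) f1 f2 m1] by simp
  qed
  have l2: "last py = LT 1"
  proof (rule ccontr)
    assume "last py \<noteq> LT 1"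
    then show False
      using core1[of 2 1 tr ts py ry IS Cy px rx Cx, OF _ a21(2) a21(1) y(2-5) x(2-5) f2 f1 m2] by simp
  qed
  have "set px \<subseteq> alph 1 2" using a12 x(2) by auto
  from form1[OF _ this l1 x(5) x(3) x(4)] obtain R1 w where
    "px = R1 @ [LP 1] @ w @ [LT 2]" "set w \<subseteq> {LP 2, LT 2}" by auto
  then have c1: "\<exists>R1 w. blocking_prefix IS ts = Some (R1 @ [LP 1] @ w @ [LT 2, LP 1]) \<and> set w \<subseteq> {LP 2, LT 2}"
    using x(1) by (intro exI[of _ R1] exI[of _ w]) simp
  have "set py \<subseteq> alph 2 1" using a21 y(2) by auto
  from form1[OF _ this l2 y(5) y(3) y(4)] obtain R3 w' where
    "py = R3 @ [LP 2] @ w' @ [LT 1]" "set w' \<subseteq> {LP 1, LT 1}" by auto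
  then have c2: "\<exists>R3 w'. blocking_prefix IS tr = Some (R3 @ [LP 2] @ w' @ [LT 1, LP 2]) \<and> set w' \<subseteq> {LP 1, LT 1}"
    using y(1) by (intro exI[of _ R3] exI[of _ w']) simp
  have c3: "\<exists>v z. ts = v @ [LT 2] @ z \<and> set v \<subseteq> {LT 1, LP 1}" by (rule form2[OF f1 a12(1)])
  have c4: "\<exists>v z. tr = v @ [LT 1] @ z \<and> set v \<subseteq> {LT 2, LP 2}" by (rule form2[OF f2 a21(2)])
  show ?thesis using c1 c2 c3 c4 by blast
qed

end
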